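(* Let $\Pi$ be an $\mathrm{LP}^{\mathrm{MLN}}$ program such that $\mathrm{SM}'[\Pi]$ is not empty, and let $I$ be an interpretation. The following are equivalent: (1) $I$ is a (probabilistic) stable model of $\Pi$; (2) $I\in\mathrm{SM}'[\Pi]$; (3) $P'_\Pi(I)>0$.
   Context: Signature with finitely many ground atoms; interpretations are sets of ground atoms. A formula is negative if every atom occurrence is in the scope of negation. A rule has the form $A\leftarrow B\wedge N$ ($A$ a possibly empty disjunction of atoms, $B$ a conjunction of atoms, $N$ a negative formula), identified with $B\wedge N\rightarrow A$. The reduct $\Pi^I$ of a ground program consists of $A\leftarrow B$ for rules with $I\models N$; $I$ is a (deterministic) stable model if it is a minimal model of $\Pi^I$. An $\mathrm{LP}^{\mathrm{MLN}}$ program $\Pi$ is a finite set of weighted rules $w:R$, $w$ real (soft) or the symbol $\alpha$ (hard), identified with its ground instance. $\overline{\Pi}$ drops weights; $\Pi_I=\{w:R\in\Pi\mid I\models R\}$; $\Pi^{\rm hard}$, $\Pi^{\rm soft}$ are its hard and soft rules. $\mathrm{SM}[\Pi]=\{I\mid I$ stable model of $\overline{\Pi_I}\}$; with $\alpha$ a real parameter, $W_\Pi(I)=\exp(\sum_{w:R\in\Pi_I}w)$ if $I\in\mathrm{SM}[\Pi]$, else $0$; $P_\Pi(I)=\lim_{\alpha\to\infty}W_\Pi(I)/\sum_{J\in\mathrm{SM}[\Pi]}W_\Pi(J)$; $I$ is a (probabilistic) stable model of $\Pi$ if $P_\Pi(I)\ne0$. $\mathrm{SM}'[\Pi]$ is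 the set of $I$ that are stable models of $\overline{\Pi_I}$ and satisfy $\overline{\Pi^{\rm hard}}$; $W'_\Pi(I)=\exp(\sum_{w:R\in(\Pi^{\rm soft})_I}w)$ if $I\in\mathrm{SM}'[\Pi]$, else $0$; $P'_\Pi(I)=W'_\Pi(I)/\sum_{J\in\mathrm{SM}'[\Pi]}W'_\Pi(J)$. *)

theory Defs
  imports Complex_Main
begin

datatype 'a formula =
    Atom 'a | Top | Bot | Neg "'a formula"
  | Conj "'a formula" "'a formula" | Disj "'a formula" "'a formula"
  | Impl "'a formula" "'a formula"

fun fsat :: "'a set \<Rightarrow> 'a formula \<Rightarrow> bool" where
  "fsat I (Atom a) = (a \<in> I)"
| "fsat I Top = True"
| "fsat I Bot = False"
| "fsat I (Neg f) = (\<not> fsat I f)"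
| "fsat I (Conj f g) = (fsat I f \<and> fsat I g)"
| "fsat I (Disj f g) = (fsat I f \<or> fsat I g)"
| "fsat I (Impl f g) = (fsat I f \<longrightarrow> fsat I g)"

fun negative :: "'a formula \<Rightarrow> bool" where
  "negative (Atom a) = False"
| "negative Top = True"
| "negative Bot = True"
| "negative (Neg f) = True"
| "negative (Conj f g) = (negative f \<and> negative g)"
| "negative (Disj f g) = (negative f \<and> negative g)"
| "negative (Impl f g) = (negative f \<and> negative g)"

text \<open>A rule  A <- B /\ N : head = set of atoms of the disjunction A,
  body = set of atoms of the conjunction B, neg = negative formula N.\<close>
record 'a rule =
  head :: "'a set"
  body :: "'a set"
  neg  :: "'a formula"

definition rsat :: "'a set \<Rightarrow> 'a rule \<Rightarrow> bool" where
  "rsat I R \<longleftrightarrow> (body R \<subseteq> I \<and> fsat I (neg R)) \<longrightarrow> head R \<inter> I \<noteq> {}"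

definition pos_model :: "('a set \<times> 'a set) set \<Rightarrow> 'a set \<Rightarrow> bool" where
  "pos_model P J \<longleftrightarrow> (\<forall>(H, B) \<in> P. B \<subseteq> J \<longrightarrow> H \<inter> J \<noteq> {})"

definition reduct :: "'a rule set \<Rightarrow> 'a set \<Rightarrow> ('a set \<times> 'a set) set" where
  "reduct Pi I = {(head R, body R) | R. R \<in> Pi \<and> fsat I (neg R)}"

definition stable_model :: "'a rule set \<Rightarrow> 'a set \<Rightarrow> bool" where
  "stable_model Pi I \<longleftrightarrow> pos_model (reduct Pi I) I \<and>
     (\<forall>J. J \<subset> I \<longrightarrow> \<not> pos_model (reduct Pi I) J)"

datatype weight = Hard | Soft real

fun wval :: "real \<Rightarrow> weight \<Rightarrow> real" where
  "wval alpha Hard = alpha"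
| "wval alpha (Soft r) = r"

type_synonym 'a lpmln = "(weight \<times> 'a rule) set"

definition sat_part :: "'a lpmln \<Rightarrow> 'a set \<Rightarrow> 'a lpmln" where
  "sat_part Pi I = {wr \<in> Pi. rsat I (snd wr)}"

definition unweight :: "'a lpmln \<Rightarrow> 'a rule set" where
  "unweight Pi = snd ` Pi"

definition hard_part :: "'a lpmln \<Rightarrow> 'a lpmln" where
  "hard_part Pi = {wr \<in> Pi. fst wr = Hard}"

definition soft_part :: "'a lpmln \<Rightarrow> 'a lpmln" where
  "soft_part Pi = {wr \<in> Pi. fst wr \<noteq> Hard}"

definition SM :: "'a lpmln \<Rightarrow> 'a set set" where
  "SM Pi = {I. stable_model (unweight (sat_part Pi I)) I}"

definition W :: "real \<Rightarrow> 'a lpmln \<Rightarrow> 'a set \<Rightarrow> real" where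
  "W alpha Pi I = (if I \<in> SM Pi then exp (\<Sum>wr \<in> sat_part Pi I. wval alpha (fst wr)) else 0)"

definition P :: "'a::finite lpmln \<Rightarrow> 'a set \<Rightarrow> real" where
  "P Pi I = Lim at_top (\<lambda>alpha. W alpha Pi I / (\<Sum>J \<in> SM Pi. W alpha Pi J))"

definition prob_stable_model :: "'a::finite lpmln \<Rightarrow> 'a set \<Rightarrow> bool" where
  "prob_stable_model Pi I \<longleftrightarrow> P Pi I \<noteq> 0"

definition SM' :: "'a lpmln \<Rightarrow> 'a set set" where
  "SM' Pi = {I. stable_model (unweight (sat_part Pi I)) I \<and>
                (\<forall>R \<in> unweight (hard_part Pi). rsat I R)}"

text \<open>On soft rules wval ignores alpha.\<close>
definition W' :: "'a lpmln \<Rightarrow> 'a set \<Rightarrow> real" where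
  "W' Pi I = (if I \<in> SM' Pi then exp (\<Sum>wr \<in> sat_part (soft_part Pi) I. wval 0 (fst wr)) else 0)"

definition P' :: "'a::finite lpmln \<Rightarrow> 'a set \<Rightarrow> real" where
  "P' Pi I = W' Pi I / (\<Sum>J \<in> SM' Pi. W' Pi J)"

end

theory Submission
  imports Defs "HOL-Real_Asymp.Real_Asymp"
begin

lemma sum_split:
  assumes "finite Pi"
  shows "(\<Sum>wr \<in> sat_part Pi J. wval alpha (fst wr)) =
     alpha * real (card (hard_part (sat_part Pi J))) +
     (\<Sum>wr \<in> sat_part (soft_part Pi) J. wval 0 (fst wr))"
proof -
  let ?A = "sat_part Pi J"
  have fA: "finite ?A" using assms by (simp add: sat_part_def)
  have eq: "?A = hard_part ?A \<union> soft_part ?A" by (auto simp: hard_part_def soft_part_def)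
  have dj: "hard_part ?A \<inter> soft_part ?A = {}" by (auto simp: hard_part_def soft_part_def)
  have "(\<Sum>wr \<in> ?A. wval alpha (fst wr)) = (\<Sum>wr \<in> hard_part ?A. wval alpha (fst wr)) + (\<Sum>wr \<in> soft_part ?A. wval alpha (fst wr))"
    by (subst eq, rule sum.union_disjoint) (use fA dj in \<open>auto simp: hard_part_def soft_part_def\<close>)
  also have "(\<Sum>wr \<in> hard_part ?A. wval alpha (fst wr)) = (\<Sum>wr \<in> hard_part ?A. alpha)"
    by (rule sum.cong) (auto simp: hard_part_def)
  also have "(\<Sum>wr \<in> soft_part ?A. wval alpha (fst wr)) = (\<Sum>wr \<in> soft_part ?A. wval 0 (fst wr))"
  proof (rule sum.cong)
    fix x assume "x \<in> soft_part ?A"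
    then have "fst x \<noteq> Hard" by (simp add: soft_part_def)
    then show "wval alpha (fst x) = wval 0 (fst x)" by (cases "fst x") auto
  qed simp
  also have "soft_part ?A = sat_part (soft_part Pi) J" by (auto simp: soft_part_def sat_part_def)
  finally show ?thesis by (simp add: mult.commute)
qed

lemma exp_lim:
  fixes c s :: real
  assumes "c < 0"
  shows "((\<lambda>a. exp (a * c + s)) \<longlongrightarrow> 0) at_top"
  using assms by real_asymp

theorem proposition5:
  fixes Pi :: "'a::finite lpmln" and I :: "'a set"
  assumes "finite Pi"
    and "\<forall>wr \<in> Pi. negative (neg (snd wr))"
    and "SM' Pi \<noteq> {}"
  shows "(prob_stable_model Pi I \<longleftrightarrow> I \<in> SM' Pi) \<and> (I \<in> SM' Pi \<longleftrightarrow> P' Pi I > 0)"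
proof -
  define h where "h J = real (card (hard_part (sat_part Pi J)))" for J
  define s where "s J = (\<Sum>wr \<in> sat_part (soft_part Pi) J. wval 0 (fst wr))" for J
  define K where "K = real (card (hard_part Pi))"
  have fin: "finite (hard_part Pi)" using assms(1) by (simp add: hard_part_def)
  have sub: "hard_part (sat_part Pi J) \<subseteq> hard_part Pi" for J
    by (auto simp: hard_part_def sat_part_def)
  have hK: "h J \<le> K" for J unfolding h_def K_def
    using card_mono[OF fin sub] by simp
  have SM'_iff: "J \<in> SM' Pi \<longleftrightarrow> J \<in> SM Pi \<and> h J = K" for J
  proof -
    have "(\<forall>R \<in> unweight (hard_part Pi). rsat J R) \<longleftrightarrow> hard_part (sat_part Pi J) = hard_part Pi"
      apply (auto simp: unweight_def hard_part_def sat_part_def)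
      subgoal for b by (drule equalityD2, drule subsetD[of _ _ "(Hard,b)"]) auto
      done
    also have "\<dots> \<longleftrightarrow> h J = K" unfolding h_def K_def
      using card_subset_eq[OF fin sub] by auto
    finally show ?thesis by (auto simp: SM'_def SM_def)
  qed
  have Wa: "W a Pi J = (if J \<in> SM Pi then exp (a * h J + s J) else 0)" for a J
    unfolding W_def h_def s_def using sum_split[OF assms(1)] by simp
  have W'a: "W' Pi J = (if J \<in> SM' Pi then exp (s J) else 0)" for J
    unfolding W'_def s_def by simp
  define g where "g J a = (if J \<in> SM Pi then exp (a * (h J - K) + s J) else 0)" for J a
  have Wg: "W a Pi J = exp (a * K) * g J a" for a J
    unfolding Wa g_def by (simp add: exp_add[symmetric] algebra_simps)
  have finSM: "finite (SM Pi)" by simp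
  have glim: "((g J) \<longlongrightarrow> W' Pi J) at_top" for J
  proof (cases "J \<in> SM Pi \<and> h J = K")
    case True
    then show ?thesis unfolding g_def W'a using SM'_iff by simp
  next
    case False
    then show ?thesis
    proof (cases "J \<in> SM Pi")
      case True
      with False hK[of J] have "h J - K < 0" by auto
      then show ?thesis unfolding g_def W'a using SM'_iff True False exp_lim by auto
    next
      case False
      then have "g J = (\<lambda>_. 0)" by (auto simp: g_def)
      then show ?thesis using False by (simp add: W'a SM'_iff)
    qed
  qed
  have SM'sub: "SM' Pi \<subseteq> SM Pi" using SM'_iff by auto
  have sumeq: "(\<Sum>J \<in> SM Pi. W' Pi J) = (\<Sum>J \<in> SM' Pi. W' Pi J)"
    by (rule sum.mono_neutral_right[OF finSM SM'sub]) (auto simp: W'a)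
  have dpos: "(\<Sum>J \<in> SM' Pi. W' Pi J) > 0"
  proof -
    obtain J0 where "J0 \<in> SM' Pi" using assms(3) by auto
    moreover have "finite (SM' Pi)" by simp
    ultimately show ?thesis
      by (intro sum_pos2[of _ J0]) (auto simp: W'a)
  qed
  have dlim: "((\<lambda>a. \<Sum>J \<in> SM Pi. g J a) \<longlongrightarrow> (\<Sum>J \<in> SM' Pi. W' Pi J)) at_top"
    using tendsto_sum[of "SM Pi" g "\<lambda>J. W' Pi J" at_top] glim sumeq by simp
  have ratio: "W a Pi I / (\<Sum>J \<in> SM Pi. W a Pi J) = g I a / (\<Sum>J \<in> SM Pi. g J a)" for a
    unfolding Wg by (simp add: sum_distrib_left[symmetric])
  have lim: "((\<lambda>a. W a Pi I / (\<Sum>J \<in> SM Pi. W a Pi J)) \<longlongrightarrow> P' Pi I) at_top"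
    unfolding ratio P'_def using tendsto_divide[OF glim dlim] dpos by simp
  have PP: "P Pi I = P' Pi I" unfolding P_def using lim by (rule tendsto_Lim[rotated]) simp
  have P'iff: "P' Pi I > 0 \<longleftrightarrow> I \<in> SM' Pi"
    using dpos by (auto simp: P'_def W'a)
  have "P' Pi I \<ge> 0" using dpos by (auto simp: P'_def W'a)
  then show ?thesis using PP P'iff by (auto simp: prob_stable_model_def)
qed

end
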